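(* Let $(S,\mathcal F,\mathcal L)$ be a $p$-local finite group and let $A\le Z(S)$ be $\mathcal F$-weakly closed. Then $\mathrm{Foc}(\mathcal F)=\mathrm{Foc}(N_{\mathcal F}(A))$.
   Context: A subgroup of $S$ is $\mathcal F$-weakly closed if no other subgroup of $S$ is $\mathcal F$-conjugate to it. For $Q\le S$, the normalizer fusion system $N_{\mathcal F}(Q)$ is the fusion system over $N_S(Q)$ with $\mathrm{Hom}_{N_{\mathcal F}(Q)}(P,P')=\{\phi\in\mathrm{Hom}_{\mathcal F}(P,P')\mid \exists\psi\in\mathrm{Hom}_{\mathcal F}(PQ,P'Q),\ \psi|_P=\phi,\ \psi(Q)\le Q\}$. For a fusion system $\mathcal E$ over a $p$-group $T$, the focal subgroup is $\mathrm{Foc}(\mathcal E)=\langle g^{-1}\alpha(g)\mid g\in P\le T,\ \alpha\in\mathrm{Aut}_{\mathcal E}(P)\rangle$. Let $p$ be a prime and $S$ a finite $p$-group. For $P,Q\le S$, $\mathrm{Hom}_S(P,Q)$ is the set of maps $c_g\colon x\mapsto gxg^{-1}$ with $g\in S$, $gPg^{-1}\le Q$, and $\mathrm{Aut}_S(P)=\mathrm{Hom}_S(P,P)$. A fusion system $\mathcal F$ over $S$ is a category whose objects are the subgroups of $S$, with $\mathrm{Hom}_S(P,Q)\subseteq\mathrm{Hom}_{\mathcal F}(P,Q)\subseteq \mathrm{Inj}(P,Q)$, such that every morphism factors as an $\mathcal F$-isomorphism followed by an inclusion. Subgroups are $\mathcal F$-conjugate if they are isomorphic in $\mathcal F$.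 $P$ is fully centralized (resp. fully normalized) if $|C_S(P)|\ge |C_S(P')|$ (resp. $|N_S(P)|\ge|N_S(P')|$) for all $P'$ $\mathcal F$-conjugate to $P$. $\mathcal F$ is saturated if (I) every fully normalized $P$ is fully centralized and $\mathrm{Aut}_S(P)$ is a Sylow $p$-subgroup of $\mathrm{Aut}_{\mathcal F}(P)$, and (II) whenever $\phi\in\mathrm{Hom}_{\mathcal F}(P,S)$ with $\phi(P)$ fully centralized, $\phi$ extends to a morphism in $\mathcal F$ defined on $N_\phi=\{g\in N_S(P):\phi c_g\phi^{-1}\in \mathrm{Aut}_S(\phi(P))\}$. $P$ is $\mathcal F$-centric if $C_S(P')\le P'$ for all $P'$ $\mathcal F$-conjugate to $P$; $\mathcal F^c$ is the full subcategory on these. A centric linking system associated to $\mathcal F$ is a category $\mathcal L$ with objects the $\mathcal F$-centric subgroups, a functor $\pi\colon\mathcal L\to\mathcal F^c$ which is the identity on objects, and monomorphisms $\delta_P\colon P\to\mathrm{Aut}_{\mathcal L}(P)$, such that (A) $Z(P)$ (via $\delta_P$) acts freely on $\mathrm{Mor}_{\mathcal L}(P,Q)$ by composition and $\pi$ induces a bijection $\mathrm{Mor}_{\mathcal L}(P,Q)/Z(P)\to\mathrm{Hom}_{\mathcal F}(P,Q)$; (B) $\pi(\delta_P(g))=c_g$ for $g\in P$; (C) $f\circ\delta_P(g)=\delta_Q(\pi(f)(g))\circ f$ for $f\in\mathrm{Mor}_{\mathcal L}(P,Q)$, $g\in P$. A $p$-local finite group is a triple $(S,\mathcal F,\mathcal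 L)$ with $\mathcal F$ a saturated fusion system over $S$ and $\mathcal L$ an associated centric linking system. *)

theory Defs
  imports "HOL-Algebra.Algebra" "HOL-Library.FuncSet"
begin

text \<open>Subgroups of S are subsets of carrier S; a morphism P -> Q is represented
  by a function 'a => 'a that is extensional on P (undefined outside P).
  A fusion system is a map F with F P Q = Hom_F(P,Q).\<close>

definition p_group :: "nat \<Rightarrow> ('a, 'b) monoid_scheme \<Rightarrow> bool" where
  "p_group p S \<longleftrightarrow> Factorial_Ring.prime p \<and> group S \<and> finite (carrier S) \<and> (\<exists>n. order S = p ^ n)"

definition conjmap :: "('a, 'b) monoid_scheme \<Rightarrow> 'a \<Rightarrow> 'a \<Rightarrow> 'a" where
  "conjmap S g = (\<lambda>x. g \<otimes>\<^bsub>S\<^esub> x \<otimes>\<^bsub>S\<^esub> inv\<^bsub>S\<^esub> g)"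

definition hom_S :: "('a, 'b) monoid_scheme \<Rightarrow> 'a set \<Rightarrow> 'a set \<Rightarrow> ('a \<Rightarrow> 'a) set" where
  "hom_S S P Q = {restrict (conjmap S g) P | g. g \<in> carrier S \<and> conjmap S g ` P \<subseteq> Q}"

definition inj_hom :: "('a, 'b) monoid_scheme \<Rightarrow> 'a set \<Rightarrow> 'a set \<Rightarrow> ('a \<Rightarrow> 'a) set" where
  "inj_hom S P Q = {\<phi>. \<phi> \<in> extensional P \<and> \<phi> ` P \<subseteq> Q \<and> inj_on \<phi> P \<and>
      (\<forall>x\<in>P. \<forall>y\<in>P. \<phi> (x \<otimes>\<^bsub>S\<^esub> y) = \<phi> x \<otimes>\<^bsub>S\<^esub> \<phi> y)}"

definition centralizer :: "('a, 'b) monoid_scheme \<Rightarrow> 'a set \<Rightarrow> 'a set" where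
  "centralizer S P = {g \<in> carrier S. \<forall>x\<in>P. g \<otimes>\<^bsub>S\<^esub> x = x \<otimes>\<^bsub>S\<^esub> g}"

definition normalizer :: "('a, 'b) monoid_scheme \<Rightarrow> 'a set \<Rightarrow> 'a set" where
  "normalizer S P = {g \<in> carrier S. conjmap S g ` P = P}"

definition center :: "('a, 'b) monoid_scheme \<Rightarrow> 'a set \<Rightarrow> 'a set" where
  "center S P = {z \<in> P. \<forall>x\<in>P. z \<otimes>\<^bsub>S\<^esub> x = x \<otimes>\<^bsub>S\<^esub> z}"

text \<open>F is a fusion system over S: a category (closed under composition) on the
  subgroups of S with Hom_S <= Hom_F <= Inj, in which every morphism factors as an
  F-isomorphism (a morphism whose inverse is in F) followed by an inclusion.\<close>
definition fusion_system :: "('a, 'b) monoid_scheme \<Rightarrow> ('a set \<Rightarrow> 'a set \<Rightarrow> ('a \<Rightarrow> 'a) set) \<Rightarrow> bool" where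
  "fusion_system S F \<longleftrightarrow>
     (\<forall>P Q. subgroup P S \<longrightarrow> subgroup Q S \<longrightarrow>
        hom_S S P Q \<subseteq> F P Q \<and> F P Q \<subseteq> inj_hom S P Q) \<and>
     (\<forall>P Q R \<phi> \<psi>. subgroup P S \<longrightarrow> subgroup Q S \<longrightarrow> subgroup R S \<longrightarrow>
        \<phi> \<in> F P Q \<longrightarrow> \<psi> \<in> F Q R \<longrightarrow> compose P \<psi> \<phi> \<in> F P R) \<and>
     (\<forall>P Q \<phi>. subgroup P S \<longrightarrow> subgroup Q S \<longrightarrow> \<phi> \<in> F P Q \<longrightarrow>
        \<phi> \<in> F P (\<phi> ` P) \<and> restrict (inv_into P \<phi>) (\<phi> ` P) \<in> F (\<phi> ` P) P)"

definition fconj :: "('a, 'b) monoid_scheme \<Rightarrow> ('a set \<Rightarrow> 'a set \<Rightarrow> ('a \<Rightarrow> 'a) set) \<Rightarrow> 'a set \<Rightarrow> 'a set \<Rightarrow> bool" where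
  "fconj S F P P' \<longleftrightarrow> subgroup P S \<and> subgroup P' S \<and> (\<exists>\<phi>\<in>F P P'. \<phi> ` P = P')"

definition weakly_closed :: "('a, 'b) monoid_scheme \<Rightarrow> ('a set \<Rightarrow> 'a set \<Rightarrow> ('a \<Rightarrow> 'a) set) \<Rightarrow> 'a set \<Rightarrow> bool" where
  "weakly_closed S F A \<longleftrightarrow> subgroup A S \<and> (\<forall>A'. fconj S F A A' \<longrightarrow> A' = A)"

definition fully_centralized :: "('a, 'b) monoid_scheme \<Rightarrow> ('a set \<Rightarrow> 'a set \<Rightarrow> ('a \<Rightarrow> 'a) set) \<Rightarrow> 'a set \<Rightarrow> bool" where
  "fully_centralized S F P \<longleftrightarrow>
     (\<forall>P'. fconj S F P P' \<longrightarrow> card (centralizer S P') \<le> card (centralizer S P))"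

definition fully_normalized :: "('a, 'b) monoid_scheme \<Rightarrow> ('a set \<Rightarrow> 'a set \<Rightarrow> ('a \<Rightarrow> 'a) set) \<Rightarrow> 'a set \<Rightarrow> bool" where
  "fully_normalized S F P \<longleftrightarrow>
     (\<forall>P'. fconj S F P P' \<longrightarrow> card (normalizer S P') \<le> card (normalizer S P))"

definition aut_group :: "('a set \<Rightarrow> 'a set \<Rightarrow> ('a \<Rightarrow> 'a) set) \<Rightarrow> 'a set \<Rightarrow> ('a \<Rightarrow> 'a) monoid" where
  "aut_group F P = \<lparr>carrier = F P P, monoid.mult = compose P, one = restrict id P\<rparr>"

definition sylow_subgroup :: "nat \<Rightarrow> ('c, 'd) monoid_scheme \<Rightarrow> 'c set \<Rightarrow> bool" where
  "sylow_subgroup p G H \<longleftrightarrow> subgroup H G \<and> card H = p ^ multiplicity p (order G)"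

text \<open>N_phi = {g in N_S(P) : phi c_g phi^-1 in Aut_S(phi(P))}.\<close>
definition N_phi :: "('a, 'b) monoid_scheme \<Rightarrow> 'a set \<Rightarrow> ('a \<Rightarrow> 'a) \<Rightarrow> 'a set" where
  "N_phi S P \<phi> = {g \<in> normalizer S P. \<exists>h\<in>carrier S. conjmap S h ` (\<phi> ` P) = \<phi> ` P \<and>
       (\<forall>x\<in>P. \<phi> (conjmap S g x) = conjmap S h (\<phi> x))}"

definition saturated :: "nat \<Rightarrow> ('a, 'b) monoid_scheme \<Rightarrow> ('a set \<Rightarrow> 'a set \<Rightarrow> ('a \<Rightarrow> 'a) set) \<Rightarrow> bool" where
  "saturated p S F \<longleftrightarrow> fusion_system S F \<and>
     (\<forall>P. subgroup P S \<longrightarrow> fully_normalized S F P \<longrightarrow>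
        fully_centralized S F P \<and> sylow_subgroup p (aut_group F P) (hom_S S P P)) \<and>
     (\<forall>P \<phi>. subgroup P S \<longrightarrow> \<phi> \<in> F P (carrier S) \<longrightarrow> fully_centralized S F (\<phi> ` P) \<longrightarrow>
        (\<exists>\<psi>\<in>F (N_phi S P \<phi>) (carrier S). \<forall>x\<in>P. \<psi> x = \<phi> x))"

definition centric :: "('a, 'b) monoid_scheme \<Rightarrow> ('a set \<Rightarrow> 'a set \<Rightarrow> ('a \<Rightarrow> 'a) set) \<Rightarrow> 'a set \<Rightarrow> bool" where
  "centric S F P \<longleftrightarrow> subgroup P S \<and> (\<forall>P'. fconj S F P P' \<longrightarrow> centralizer S P' \<subseteq> P')"

text \<open>Mor P Q = Mor_L(P,Q); cmp P Q R g f = g o f for f : P -> Q, g : Q -> R;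
  idm P = identity of P; proj P Q f = proj(f) in Hom_F(P,Q); delta P g = delta_P(g).\<close>
definition linking_system ::
  "('a, 'b) monoid_scheme \<Rightarrow> ('a set \<Rightarrow> 'a set \<Rightarrow> ('a \<Rightarrow> 'a) set) \<Rightarrow>
   ('a set \<Rightarrow> 'a set \<Rightarrow> 'm set) \<Rightarrow> ('a set \<Rightarrow> 'a set \<Rightarrow> 'a set \<Rightarrow> 'm \<Rightarrow> 'm \<Rightarrow> 'm) \<Rightarrow>
   ('a set \<Rightarrow> 'm) \<Rightarrow> ('a set \<Rightarrow> 'a set \<Rightarrow> 'm \<Rightarrow> ('a \<Rightarrow> 'a)) \<Rightarrow> ('a set \<Rightarrow> 'a \<Rightarrow> 'm) \<Rightarrow> bool" where
  "linking_system S F Mor cmp idm proj delta \<longleftrightarrow>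
   \<comment> \<open>category structure\<close>
   (\<forall>P Q R f g. centric S F P \<longrightarrow> centric S F Q \<longrightarrow> centric S F R \<longrightarrow>
      f \<in> Mor P Q \<longrightarrow> g \<in> Mor Q R \<longrightarrow> cmp P Q R g f \<in> Mor P R) \<and>
   (\<forall>P Q R T f g h. centric S F P \<longrightarrow> centric S F Q \<longrightarrow> centric S F R \<longrightarrow> centric S F T \<longrightarrow>
      f \<in> Mor P Q \<longrightarrow> g \<in> Mor Q R \<longrightarrow> h \<in> Mor R T \<longrightarrow>
      cmp P R T h (cmp P Q R g f) = cmp P Q T (cmp Q R T h g) f) \<and>
   (\<forall>P. centric S F P \<longrightarrow> idm P \<in> Mor P P) \<and>
   (\<forall>P Q f. centric S F P \<longrightarrow> centric S F Q \<longrightarrow> f \<in> Mor P Q \<longrightarrow>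
      cmp P P Q f (idm P) = f \<and> cmp P Q Q (idm Q) f = f) \<and>
   \<comment> \<open>proj is a functor to F^c, identity on objects\<close>
   (\<forall>P Q f. centric S F P \<longrightarrow> centric S F Q \<longrightarrow> f \<in> Mor P Q \<longrightarrow> proj P Q f \<in> F P Q) \<and>
   (\<forall>P Q R f g. centric S F P \<longrightarrow> centric S F Q \<longrightarrow> centric S F R \<longrightarrow>
      f \<in> Mor P Q \<longrightarrow> g \<in> Mor Q R \<longrightarrow>
      proj P R (cmp P Q R g f) = compose P (proj Q R g) (proj P Q f)) \<and>
   (\<forall>P. centric S F P \<longrightarrow> proj P P (idm P) = restrict id P) \<and>
   \<comment> \<open>delta_P : P -> Aut_L(P) is a monomorphism of groups\<close>
   (\<forall>P. centric S F P \<longrightarrow>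
      (\<forall>g\<in>P. delta P g \<in> Mor P P) \<and>
      (\<forall>g\<in>P. \<forall>h\<in>P. delta P (g \<otimes>\<^bsub>S\<^esub> h) = cmp P P P (delta P g) (delta P h)) \<and>
      delta P \<one>\<^bsub>S\<^esub> = idm P \<and> inj_on (delta P) P) \<and>
   \<comment> \<open>(A) Z(P) acts freely on Mor(P,Q), and proj induces a bijection Mor(P,Q)/Z(P) -> Hom_F(P,Q)\<close>
   (\<forall>P Q. centric S F P \<longrightarrow> centric S F Q \<longrightarrow>
      (\<forall>f\<in>Mor P Q. \<forall>z\<in>center S P. cmp P P Q f (delta P z) = f \<longrightarrow> z = \<one>\<^bsub>S\<^esub>) \<and>
      proj P Q ` Mor P Q = F P Q \<and>
      (\<forall>f\<in>Mor P Q. \<forall>f'\<in>Mor P Q. proj P Q f = proj P Q f' \<longrightarrow>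
          (\<exists>z\<in>center S P. f' = cmp P P Q f (delta P z)))) \<and>
   \<comment> \<open>(B)\<close>
   (\<forall>P. centric S F P \<longrightarrow> (\<forall>g\<in>P. proj P P (delta P g) = restrict (conjmap S g) P)) \<and>
   \<comment> \<open>(C)\<close>
   (\<forall>P Q f g. centric S F P \<longrightarrow> centric S F Q \<longrightarrow> f \<in> Mor P Q \<longrightarrow> g \<in> P \<longrightarrow>
      cmp P P Q f (delta P g) = cmp P Q Q (delta Q (proj P Q f g)) f)"

definition p_local_finite_group ::
  "nat \<Rightarrow> ('a, 'b) monoid_scheme \<Rightarrow> ('a set \<Rightarrow> 'a set \<Rightarrow> ('a \<Rightarrow> 'a) set) \<Rightarrow>
   ('a set \<Rightarrow> 'a set \<Rightarrow> 'm set) \<Rightarrow> ('a set \<Rightarrow> 'a set \<Rightarrow> 'a set \<Rightarrow> 'm \<Rightarrow> 'm \<Rightarrow> 'm) \<Rightarrow>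
   ('a set \<Rightarrow> 'm) \<Rightarrow> ('a set \<Rightarrow> 'a set \<Rightarrow> 'm \<Rightarrow> ('a \<Rightarrow> 'a)) \<Rightarrow> ('a set \<Rightarrow> 'a \<Rightarrow> 'm) \<Rightarrow> bool" where
  "p_local_finite_group p S F Mor cmp idm proj delta \<longleftrightarrow>
     p_group p S \<and> saturated p S F \<and> linking_system S F Mor cmp idm proj delta"

text \<open>The normalizer fusion system N_F(Q) over N_S(Q) (for subgroups P, P' of N_S(Q)).\<close>
definition normalizer_fs :: "('a, 'b) monoid_scheme \<Rightarrow> ('a set \<Rightarrow> 'a set \<Rightarrow> ('a \<Rightarrow> 'a) set) \<Rightarrow>
    'a set \<Rightarrow> 'a set \<Rightarrow> 'a set \<Rightarrow> ('a \<Rightarrow> 'a) set" where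
  "normalizer_fs S F Q P P' = {\<phi> \<in> F P P'. \<exists>\<psi>\<in>F (P <#>\<^bsub>S\<^esub> Q) (P' <#>\<^bsub>S\<^esub> Q).
      (\<forall>x\<in>P. \<psi> x = \<phi> x) \<and> \<psi> ` Q \<subseteq> Q}"

definition focal :: "('a, 'b) monoid_scheme \<Rightarrow> 'a set \<Rightarrow> ('a set \<Rightarrow> 'a set \<Rightarrow> ('a \<Rightarrow> 'a) set) \<Rightarrow> 'a set" where
  "focal S T E = generate S {inv\<^bsub>S\<^esub> g \<otimes>\<^bsub>S\<^esub> \<alpha> g | g P \<alpha>.
      subgroup P S \<and> P \<subseteq> T \<and> g \<in> P \<and> \<alpha> \<in> E P P}"

end

theory Submission
  imports Defs
begin

context group begin

lemma set_mult_mem: "x \<in> P <#> A \<longleftrightarrow> (\<exists>p\<in>P. \<exists>a\<in>A. x = p \<otimes> a)"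
  unfolding set_mult_def by blast


lemma conjmap_one: "x \<in> carrier G \<Longrightarrow> conjmap G \<one> x = x"
  by (simp add: conjmap_def)

lemma conjmap_central: "g \<in> center G (carrier G) \<Longrightarrow> x \<in> carrier G \<Longrightarrow> conjmap G g x = x"
proof -
  assume a: "g \<in> center G (carrier G)" "x \<in> carrier G"
  hence g: "g \<in> carrier G" and c: "g \<otimes> x = x \<otimes> g" unfolding center_def by auto
  have "conjmap G g x = x \<otimes> g \<otimes> inv g" unfolding conjmap_def using c by simp
  also have "\<dots> = x" using g a(2) by (simp add: m_assoc)
  finally show ?thesis .
qed

lemma conjmap_closed: "g \<in> carrier G \<Longrightarrow> x \<in> carrier G \<Longrightarrow> conjmap G g x \<in> carrier G"
  by (simp add: conjmap_def)

lemma conjmap_mult: "g \<in> carrier G \<Longrightarrow> h \<in> carrier G \<Longrightarrow> x \<in> carrier G \<Longrightarrow>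
   conjmap G (g \<otimes> h) x = conjmap G g (conjmap G h x)"
  by (simp add: conjmap_def m_assoc inv_mult_group)

lemma conjmap_inv_cancel: "g \<in> carrier G \<Longrightarrow> x \<in> carrier G \<Longrightarrow> conjmap G (inv g) (conjmap G g x) = x"
  by (simp add: conjmap_def m_assoc) (simp add: m_assoc[symmetric])

lemma conjmap_cancel_inv: "g \<in> carrier G \<Longrightarrow> x \<in> carrier G \<Longrightarrow> conjmap G g (conjmap G (inv g) x) = x"
  by (simp add: conjmap_def m_assoc) (simp add: m_assoc[symmetric])

lemma inj_homD:
  assumes "\<phi> \<in> inj_hom G P Q"
  shows "\<phi> \<in> extensional P" "\<phi> ` P \<subseteq> Q" "inj_on \<phi> P"
    "\<And>x y. x \<in> P \<Longrightarrow> y \<in> P \<Longrightarrow> \<phi> (x \<otimes> y) = \<phi> x \<otimes> \<phi> y"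
  using assms unfolding inj_hom_def by auto

lemma hom_one:
  assumes "subgroup P G" "\<phi> \<in> inj_hom G P (carrier G)"
  shows "\<phi> \<one> = \<one>"
proof -
  have o: "\<one> \<in> P" using assms(1) subgroup.one_closed by blast
  have c: "\<phi> \<one> \<in> carrier G" using inj_homD(2)[OF assms(2)] o by blast
  have h: "\<phi> \<one> = \<phi> \<one> \<otimes> \<phi> \<one>" using inj_homD(4)[OF assms(2) o o] by simp
  have e: "\<phi> \<one> \<otimes> \<phi> \<one> = \<phi> \<one> \<otimes> \<one>" by (subst r_one[OF c]) (rule h[symmetric])
  show ?thesis using l_cancel[OF e c one_closed c] .
qed

lemma hom_inv:
  assumes "subgroup P G" "\<phi> \<in> inj_hom G P (carrier G)" "x \<in> P"
  shows "\<phi> (inv x) = inv (\<phi> x)"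
proof -
  have xc: "x \<in> carrier G" using subgroup.mem_carrier[OF assms(1,3)] .
  have ix: "inv x \<in> P" using subgroup.m_inv_closed[OF assms(1,3)] .
  have c1: "\<phi> x \<in> carrier G" "\<phi> (inv x) \<in> carrier G" using inj_homD(2)[OF assms(2)] assms(3) ix by auto
  have "\<phi> (inv x) \<otimes> \<phi> x = \<phi> (inv x \<otimes> x)"
    using inj_homD(4)[OF assms(2) ix assms(3)] by (rule sym)
  also have "\<dots> = \<phi> \<one>" using xc by simp
  also have "\<dots> = \<one>" using hom_one[OF assms(1,2)] .
  finally have e: "\<phi> (inv x) \<otimes> \<phi> x = \<one>" .
  show ?thesis using inv_equality[OF e c1] by simp
qed

lemma hom_conj:
  assumes "subgroup P G" "\<phi> \<in> inj_hom G P (carrier G)" "g \<in> P" "x \<in> P"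
  shows "\<phi> (conjmap G g x) = conjmap G (\<phi> g) (\<phi> x)"
proof -
  have ig: "inv g \<in> P" using subgroup.m_inv_closed[OF assms(1,3)] .
  have gx: "g \<otimes> x \<in> P" using subgroup.m_closed[OF assms(1,3,4)] .
  show ?thesis unfolding conjmap_def
    using inj_homD(4)[OF assms(2) gx ig] inj_homD(4)[OF assms(2) assms(3,4)] hom_inv[OF assms(1,2,3)]
    by simp
qed

lemma hom_image_subgroup:
  assumes "subgroup P G" "\<phi> \<in> inj_hom G P (carrier G)"
  shows "subgroup (\<phi> ` P) G"
proof (rule subgroup.intro)
  show "\<phi> ` P \<subseteq> carrier G" using inj_homD(2)[OF assms(2)] .
  show "\<one> \<in> \<phi> ` P" using hom_one[OF assms] subgroup.one_closed[OF assms(1)] by force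
  fix x y assume "x \<in> \<phi> ` P" "y \<in> \<phi> ` P"
  then obtain a b where "a \<in> P" "b \<in> P" "x = \<phi> a" "y = \<phi> b" by auto
  moreover have "a \<otimes> b \<in> P" using \<open>a \<in> P\<close> \<open>b \<in> P\<close> subgroup.m_closed[OF assms(1)] by blast
  moreover have "\<phi> (a \<otimes> b) = \<phi> a \<otimes> \<phi> b" using inj_homD(4)[OF assms(2)] \<open>a \<in> P\<close> \<open>b \<in> P\<close> by blast
  ultimately show "x \<otimes> y \<in> \<phi> ` P" by force
next
  fix x assume "x \<in> \<phi> ` P"
  then obtain a where "a \<in> P" "x = \<phi> a" by auto
  moreover have "inv a \<in> P" using \<open>a \<in> P\<close> subgroup.m_inv_closed[OF assms(1)] by blast
  moreover have "\<phi> (inv a) = inv (\<phi> a)" using hom_inv[OF assms] \<open>a \<in> P\<close> by blast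
  ultimately show "inv x \<in> \<phi> ` P" by force
qed

lemma prod_subgroup:
  assumes "subgroup P G" "subgroup A G" "A \<subseteq> center G (carrier G)"
  shows "subgroup (P <#> A) G"
proof (rule subgroup.intro)
  have Pc: "P \<subseteq> carrier G" and Ac: "A \<subseteq> carrier G" using assms subgroup.subset by auto
  have comm: "\<And>a x. a \<in> A \<Longrightarrow> x \<in> carrier G \<Longrightarrow> a \<otimes> x = x \<otimes> a"
    using assms(3) unfolding center_def by auto
  show "P <#> A \<subseteq> carrier G" using Pc Ac by (simp add: setmult_subset_G)
  show "\<one> \<in> P <#> A" unfolding set_mult_mem
    using subgroup.one_closed[OF assms(1)] subgroup.one_closed[OF assms(2)] by force
  fix x y assume "x \<in> P <#> A" "y \<in> P <#> A"
  then obtain p a q b where pa: "p \<in> P" "a \<in> A" "q \<in> P" "b \<in> A" "x = p \<otimes> a" "y = q \<otimes> b"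
    unfolding set_mult_mem by blast
  have c: "p \<in> carrier G" "a \<in> carrier G" "q \<in> carrier G" "b \<in> carrier G" using pa Pc Ac by auto
  have "x \<otimes> y = p \<otimes> (a \<otimes> q) \<otimes> b" using c by (simp add: pa m_assoc)
  also have "\<dots> = p \<otimes> (q \<otimes> a) \<otimes> b" using comm[OF pa(2) c(3)] by simp
  also have "\<dots> = (p \<otimes> q) \<otimes> (a \<otimes> b)" using c by (simp add: m_assoc)
  finally have "x \<otimes> y = (p \<otimes> q) \<otimes> (a \<otimes> b)" .
  moreover have "p \<otimes> q \<in> P" "a \<otimes> b \<in> A" using pa subgroup.m_closed assms by metis+
  ultimately show "x \<otimes> y \<in> P <#> A" unfolding set_mult_mem by blast
next
  have Pc: "P \<subseteq> carrier G" and Ac: "A \<subseteq> carrier G" using assms subgroup.subset by auto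
  have comm: "\<And>a x. a \<in> A \<Longrightarrow> x \<in> carrier G \<Longrightarrow> a \<otimes> x = x \<otimes> a"
    using assms(3) unfolding center_def by auto
  fix x assume "x \<in> P <#> A"
  then obtain p a where pa: "p \<in> P" "a \<in> A" "x = p \<otimes> a" unfolding set_mult_mem by blast
  have c: "p \<in> carrier G" "a \<in> carrier G" using pa Pc Ac by auto
  have "inv x = inv a \<otimes> inv p" using c pa by (simp add: inv_mult_group)
  also have "\<dots> = inv p \<otimes> inv a"
    using comm[of "inv a" "inv p"] subgroup.m_inv_closed[OF assms(2) pa(2)] c by simp
  finally have "inv x = inv p \<otimes> inv a" .
  moreover have "inv p \<in> P" "inv a \<in> A" using pa subgroup.m_inv_closed assms by metis+
  ultimately show "inv x \<in> P <#> A" unfolding set_mult_mem by blast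
qed

lemma prod_sub_left: "subgroup A G \<Longrightarrow> P \<subseteq> carrier G \<Longrightarrow> P \<subseteq> P <#> A"
proof
  fix x assume "subgroup A G" "P \<subseteq> carrier G" "x \<in> P"
  moreover have "\<one> \<in> A" using \<open>subgroup A G\<close> subgroup.one_closed by blast
  moreover have "x = x \<otimes> \<one>" using calculation by auto
  ultimately show "x \<in> P <#> A" unfolding set_mult_mem by blast
qed

lemma prod_sub_right: "subgroup P G \<Longrightarrow> A \<subseteq> carrier G \<Longrightarrow> A \<subseteq> P <#> A"
proof
  fix x assume "subgroup P G" "A \<subseteq> carrier G" "x \<in> A"
  moreover have "\<one> \<in> P" using \<open>subgroup P G\<close> subgroup.one_closed by blast
  moreover have "x = \<one> \<otimes> x" using calculation by auto
  ultimately show "x \<in> P <#> A" unfolding set_mult_mem by blast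
qed

lemma prod_in_subgroup: "subgroup N G \<Longrightarrow> P \<subseteq> N \<Longrightarrow> A \<subseteq> N \<Longrightarrow> P <#> A \<subseteq> N"
proof
  fix x assume N: "subgroup N G" "P \<subseteq> N" "A \<subseteq> N" and "x \<in> P <#> A"
  then obtain p a where "p \<in> P" "a \<in> A" "x = p \<otimes> a" unfolding set_mult_mem by blast
  thus "x \<in> N" using N subgroup.m_closed[OF N(1)] by blast
qed

lemma hom_image_prod:
  assumes "\<phi> \<in> inj_hom G N (carrier G)" "subgroup N G" "P \<subseteq> N" "A \<subseteq> N"
  shows "\<phi> ` (P <#> A) = \<phi> ` P <#> \<phi> ` A"
proof
  show "\<phi> ` (P <#> A) \<subseteq> \<phi> ` P <#> \<phi> ` A"
  proof
    fix y assume "y \<in> \<phi> ` (P <#> A)"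
    then obtain z where "z \<in> P <#> A" "y = \<phi> z" by blast
    then obtain p a where pa: "p \<in> P" "a \<in> A" "y = \<phi> (p \<otimes> a)" unfolding set_mult_mem by blast
    have "y = \<phi> p \<otimes> \<phi> a" using pa inj_homD(4)[OF assms(1)] assms(3,4) by blast
    thus "y \<in> \<phi> ` P <#> \<phi> ` A" using pa unfolding set_mult_mem by blast
  qed
  show "\<phi> ` P <#> \<phi> ` A \<subseteq> \<phi> ` (P <#> A)"
  proof
    fix y assume "y \<in> \<phi> ` P <#> \<phi> ` A"
    then obtain p a where pa: "p \<in> P" "a \<in> A" "y = \<phi> p \<otimes> \<phi> a" unfolding set_mult_mem by blast
    have "y = \<phi> (p \<otimes> a)" using pa inj_homD(4)[OF assms(1)] assms(3,4) by (metis subsetD)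
    moreover have "p \<otimes> a \<in> P <#> A" using pa unfolding set_mult_mem by blast
    ultimately show "y \<in> \<phi> ` (P <#> A)" by blast
  qed
qed


lemma fsD:
  assumes "fusion_system G F"
  shows "\<And>P Q. subgroup P G \<Longrightarrow> subgroup Q G \<Longrightarrow> hom_S G P Q \<subseteq> F P Q"
    "\<And>P Q. subgroup P G \<Longrightarrow> subgroup Q G \<Longrightarrow> F P Q \<subseteq> inj_hom G P Q"
    "\<And>P Q R \<phi> \<psi>. subgroup P G \<Longrightarrow> subgroup Q G \<Longrightarrow> subgroup R G \<Longrightarrow>
        \<phi> \<in> F P Q \<Longrightarrow> \<psi> \<in> F Q R \<Longrightarrow> compose P \<psi> \<phi> \<in> F P R"
    "\<And>P Q \<phi>. subgroup P G \<Longrightarrow> subgroup Q G \<Longrightarrow> \<phi> \<in> F P Q \<Longrightarrow> \<phi> \<in> F P (\<phi> ` P)"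
    "\<And>P Q \<phi>. subgroup P G \<Longrightarrow> subgroup Q G \<Longrightarrow> \<phi> \<in> F P Q \<Longrightarrow>
        restrict (inv_into P \<phi>) (\<phi> ` P) \<in> F (\<phi> ` P) P"
  using assms unfolding fusion_system_def by blast+

lemma inj_hom_carrier: "\<phi> \<in> inj_hom G P Q \<Longrightarrow> Q \<subseteq> carrier G \<Longrightarrow> \<phi> \<in> inj_hom G P (carrier G)"
  unfolding inj_hom_def by blast

lemma F_inj:
  assumes "fusion_system G F" "subgroup P G" "subgroup Q G" "\<phi> \<in> F P Q"
  shows "\<phi> \<in> inj_hom G P (carrier G)" "\<phi> \<in> inj_hom G P Q"
  using fsD(2)[OF assms(1-3)] assms(4) inj_hom_carrier subgroup.subset[OF assms(3)] by blast+

lemma F_image_subgroup: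
  assumes "fusion_system G F" "subgroup P G" "subgroup Q G" "\<phi> \<in> F P Q"
  shows "subgroup (\<phi> ` P) G"
  using hom_image_subgroup[OF assms(2) F_inj(1)[OF assms]] .

lemma incl_F:
  assumes "fusion_system G F" "subgroup Q G" "subgroup N G" "Q \<subseteq> N"
  shows "restrict id Q \<in> F Q N"
proof -
  have "conjmap G \<one> ` Q \<subseteq> N"
  proof
    fix y assume "y \<in> conjmap G \<one> ` Q"
    then obtain x where "x \<in> Q" "y = conjmap G \<one> x" by blast
    moreover have "x \<in> carrier G" using \<open>x \<in> Q\<close> subgroup.subset[OF assms(2)] by blast
    ultimately show "y \<in> N" using conjmap_one assms(4) by auto
  qed
  hence "restrict (conjmap G \<one>) Q \<in> hom_S G Q N"
    unfolding hom_S_def using one_closed by blast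
  moreover have "restrict (conjmap G \<one>) Q = restrict id Q"
    using subgroup.subset[OF assms(2)] conjmap_one by (intro restrict_ext) auto
  ultimately show ?thesis using fsD(1)[OF assms(1-3)] by auto
qed

lemma restrict_F:
  assumes "fusion_system G F" "subgroup Q G" "subgroup N G" "subgroup R G" "Q \<subseteq> N" "\<psi> \<in> F N R"
  shows "restrict \<psi> Q \<in> F Q R"
proof -
  have "compose Q \<psi> (restrict id Q) \<in> F Q R"
    using fsD(3)[OF assms(1,2,3,4) incl_F[OF assms(1,2,3,5)] assms(6)] .
  moreover have "compose Q \<psi> (restrict id Q) = restrict \<psi> Q"
    unfolding compose_def by (intro restrict_ext) auto
  ultimately show ?thesis by simp
qed

lemma retarget_F:
  assumes "fusion_system G F" "subgroup P G" "subgroup Q G" "subgroup R G" "\<phi> \<in> F P Q" "\<phi> ` P \<subseteq> R"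
  shows "\<phi> \<in> F P R"
proof -
  have s: "subgroup (\<phi> ` P) G" using F_image_subgroup[OF assms(1,2,3,5)] .
  have "compose P (restrict id (\<phi> ` P)) \<phi> \<in> F P R"
    using fsD(3)[OF assms(1,2) s assms(4) fsD(4)[OF assms(1,2,3,5)] incl_F[OF assms(1) s assms(4,6)]] .
  moreover have "compose P (restrict id (\<phi> ` P)) \<phi> = \<phi>"
  proof -
    have e: "\<phi> \<in> extensional P" using inj_homD(1)[OF F_inj(2)[OF assms(1,2,3,5)]] .
    have "compose P (restrict id (\<phi> ` P)) \<phi> = restrict \<phi> P"
      unfolding compose_def by (intro restrict_ext) auto
    thus ?thesis using e by (simp add: extensional_restrict)
  qed
  ultimately show ?thesis by simp
qed

lemma weakly_closed_image:
  assumes "fusion_system G F" "weakly_closed G F A" "subgroup N G" "A \<subseteq> N" "\<psi> \<in> F N (carrier G)"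
  shows "\<psi> ` A = A"
proof -
  have A: "subgroup A G" using assms(2) unfolding weakly_closed_def by blast
  have r: "restrict \<psi> A \<in> F A (carrier G)"
    using restrict_F[OF assms(1) A assms(3) subgroup_self assms(4,5)] .
  have im: "restrict \<psi> A ` A = \<psi> ` A" by auto
  have "restrict \<psi> A \<in> F A (\<psi> ` A)" using fsD(4)[OF assms(1) A subgroup_self r] unfolding im .
  moreover have "subgroup (\<psi> ` A) G" using F_image_subgroup[OF assms(1) A subgroup_self r] unfolding im .
  ultimately have "fconj G F A (\<psi> ` A)" unfolding fconj_def using A im by blast
  thus ?thesis using assms(2) unfolding weakly_closed_def by blast
qed

lemma fconj_refl: "fusion_system G F \<Longrightarrow> subgroup P G \<Longrightarrow> fconj G F P P"
  unfolding fconj_def using incl_F[of F P P] by (intro conjI bexI[of _ "restrict id P"]) auto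

lemma fconj_trans:
  assumes "fusion_system G F" "fconj G F P Q" "fconj G F Q R"
  shows "fconj G F P R"
proof -
  obtain \<phi> \<psi> where p: "\<phi> \<in> F P Q" "\<phi> ` P = Q" "\<psi> \<in> F Q R" "\<psi> ` Q = R"
    and s: "subgroup P G" "subgroup Q G" "subgroup R G"
    using assms(2,3) unfolding fconj_def by blast
  have "compose P \<psi> \<phi> \<in> F P R" using fsD(3)[OF assms(1) s p(1,3)] .
  moreover have "compose P \<psi> \<phi> ` P = R" using p(2,4) unfolding compose_def by auto
  ultimately show ?thesis unfolding fconj_def using s by blast
qed


lemma conjmap_fix:
  assumes "a \<in> center G (carrier G)" "g \<in> carrier G" shows "conjmap G g a = a"
proof -
  have a: "a \<in> carrier G" and c: "a \<otimes> g = g \<otimes> a" using assms unfolding center_def by auto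
  have "conjmap G g a = a \<otimes> g \<otimes> inv g" unfolding conjmap_def using c by simp
  also have "\<dots> = a" using a assms(2) by (simp add: m_assoc)
  finally show ?thesis .
qed

lemma normalizer_central:
  assumes "A \<subseteq> center G (carrier G)" shows "normalizer G A = carrier G"
proof -
  have "\<And>g. g \<in> carrier G \<Longrightarrow> conjmap G g ` A = A"
  proof -
    fix g assume g: "g \<in> carrier G"
    have "conjmap G g ` A = id ` A" using conjmap_fix[OF _ g] assms by (intro image_cong) auto
    thus "conjmap G g ` A = A" by simp
  qed
  thus ?thesis unfolding normalizer_def by blast
qed

lemma conj_image_mult:
  assumes "g \<in> carrier G" "h \<in> carrier G" "Y \<subseteq> carrier G"
  shows "conjmap G (g \<otimes> h) ` Y = conjmap G g ` (conjmap G h ` Y)"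
proof -
  have "conjmap G (g \<otimes> h) ` Y = (\<lambda>x. conjmap G g (conjmap G h x)) ` Y"
    using conjmap_mult[OF assms(1,2)] assms(3) by (intro image_cong) auto
  thus ?thesis by (simp add: image_image)
qed

lemma conj_image_inv:
  assumes "g \<in> carrier G" "Y \<subseteq> carrier G" "conjmap G g ` Y = Y"
  shows "conjmap G (inv g) ` Y = Y"
proof -
  have "conjmap G (inv g) ` Y = conjmap G (inv g) ` (conjmap G g ` Y)" using assms(3) by simp
  also have "\<dots> = (\<lambda>x. conjmap G (inv g) (conjmap G g x)) ` Y" by (simp add: image_image)
  also have "\<dots> = id ` Y" using conjmap_inv_cancel[OF assms(1)] assms(2) by (intro image_cong) auto
  finally show ?thesis by simp
qed

lemma conj_image_one: "Y \<subseteq> carrier G \<Longrightarrow> conjmap G \<one> ` Y = Y"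
proof -
  assume Y: "Y \<subseteq> carrier G"
  have "conjmap G \<one> ` Y = id ` Y" using conjmap_one Y by (intro image_cong) auto
  thus ?thesis by simp
qed

lemma conj_image_subgroup:
  assumes "subgroup P G" "g \<in> P" shows "conjmap G g ` P = P"
proof
  have gc: "g \<in> carrier G" using subgroup.mem_carrier[OF assms] .
  have ig: "inv g \<in> P" using subgroup.m_inv_closed[OF assms] .
  have cl: "\<And>h x. h \<in> P \<Longrightarrow> x \<in> P \<Longrightarrow> conjmap G h x \<in> P"
    unfolding conjmap_def using assms(1) by (meson subgroup.m_closed subgroup.m_inv_closed)
  show "conjmap G g ` P \<subseteq> P" using cl[OF assms(2)] by blast
  show "P \<subseteq> conjmap G g ` P"
  proof
    fix x assume x: "x \<in> P"
    have "x = conjmap G g (conjmap G (inv g) x)"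
      using conjmap_cancel_inv[OF gc] subgroup.mem_carrier[OF assms(1) x] by simp
    moreover have "conjmap G (inv g) x \<in> P" using cl[OF ig x] .
    ultimately show "x \<in> conjmap G g ` P" by blast
  qed
qed

lemma N_phi_iff: "g \<in> N_phi G P \<phi> \<longleftrightarrow> g \<in> carrier G \<and> conjmap G g ` P = P \<and>
   (\<exists>h\<in>carrier G. conjmap G h ` (\<phi> ` P) = \<phi> ` P \<and> (\<forall>x\<in>P. \<phi> (conjmap G g x) = conjmap G h (\<phi> x)))"
  unfolding N_phi_def normalizer_def by simp

lemma N_phi_subgroup:
  assumes P: "subgroup P G" and phi: "\<phi> \<in> inj_hom G P (carrier G)"
  shows "subgroup (N_phi G P \<phi>) G"
proof (rule subgroup.intro)
  have Pc: "P \<subseteq> carrier G" using subgroup.subset[OF P] .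
  have fPc: "\<phi> ` P \<subseteq> carrier G" using inj_homD(2)[OF phi] .
  show "N_phi G P \<phi> \<subseteq> carrier G" unfolding N_phi_def normalizer_def by blast
  have "\<one> \<in> normalizer G P" unfolding normalizer_def using conj_image_one[OF Pc] by blast
  moreover have "\<forall>x\<in>P. \<phi> (conjmap G \<one> x) = conjmap G \<one> (\<phi> x)"
  proof
    fix x assume x: "x \<in> P"
    have "x \<in> carrier G" "\<phi> x \<in> carrier G" using x Pc fPc by auto
    thus "\<phi> (conjmap G \<one> x) = conjmap G \<one> (\<phi> x)" by (simp add: conjmap_one)
  qed
  ultimately show "\<one> \<in> N_phi G P \<phi>" unfolding N_phi_iff
    using conj_image_one[OF fPc] conj_image_one[OF Pc] one_closed by blast
next
  have Pc: "P \<subseteq> carrier G" using subgroup.subset[OF P] .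
  have fPc: "\<phi> ` P \<subseteq> carrier G" using inj_homD(2)[OF phi] .
  fix g1 g2 assume "g1 \<in> N_phi G P \<phi>" "g2 \<in> N_phi G P \<phi>"
  hence m1: "g1 \<in> carrier G \<and> conjmap G g1 ` P = P \<and>
   (\<exists>h\<in>carrier G. conjmap G h ` (\<phi> ` P) = \<phi> ` P \<and> (\<forall>x\<in>P. \<phi> (conjmap G g1 x) = conjmap G h (\<phi> x)))"
    and m2: "g2 \<in> carrier G \<and> conjmap G g2 ` P = P \<and>
   (\<exists>h\<in>carrier G. conjmap G h ` (\<phi> ` P) = \<phi> ` P \<and> (\<forall>x\<in>P. \<phi> (conjmap G g2 x) = conjmap G h (\<phi> x)))"
    unfolding N_phi_iff by blast+
  obtain h1 where h1: "h1 \<in> carrier G" "conjmap G h1 ` (\<phi> ` P) = \<phi> ` P" "\<forall>x\<in>P. \<phi> (conjmap G g1 x) = conjmap G h1 (\<phi> x)"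
    using m1 by blast
  obtain h2 where h2: "h2 \<in> carrier G" "conjmap G h2 ` (\<phi> ` P) = \<phi> ` P" "\<forall>x\<in>P. \<phi> (conjmap G g2 x) = conjmap G h2 (\<phi> x)"
    using m2 by blast
  have g: "g1 \<in> carrier G" "conjmap G g1 ` P = P" "g2 \<in> carrier G" "conjmap G g2 ` P = P" using m1 m2 by blast+
  note h = h1 h2
  have "conjmap G (g1 \<otimes> g2) ` P = P" using conj_image_mult[OF g(1,3) Pc] g by simp
  hence n: "g1 \<otimes> g2 \<in> normalizer G P" unfolding normalizer_def using g by blast
  have i: "conjmap G (h1 \<otimes> h2) ` (\<phi> ` P) = \<phi> ` P" using conj_image_mult[OF h(1,4) fPc] h by simp
  have "\<forall>x\<in>P. \<phi> (conjmap G (g1 \<otimes> g2) x) = conjmap G (h1 \<otimes> h2) (\<phi> x)"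
  proof
    fix x assume x: "x \<in> P"
    have xc: "x \<in> carrier G" using x Pc by blast
    have y: "conjmap G g2 x \<in> P" using g(4) x by blast
    have "\<phi> (conjmap G (g1 \<otimes> g2) x) = \<phi> (conjmap G g1 (conjmap G g2 x))"
      using conjmap_mult[OF g(1,3) xc] by simp
    also have "\<dots> = conjmap G h1 (\<phi> (conjmap G g2 x))" using h(3) y by blast
    also have "\<dots> = conjmap G h1 (conjmap G h2 (\<phi> x))" using h(6) x by simp
    also have "\<dots> = conjmap G (h1 \<otimes> h2) (\<phi> x)" using conjmap_mult[OF h(1,4)] fPc x by auto
    finally show "\<phi> (conjmap G (g1 \<otimes> g2) x) = conjmap G (h1 \<otimes> h2) (\<phi> x)" .
  qed
  thus "g1 \<otimes> g2 \<in> N_phi G P \<phi>" unfolding N_phi_iff using n i h(1,4) m_closed[OF g(1,3)]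
    unfolding normalizer_def by blast
next
  have Pc: "P \<subseteq> carrier G" using subgroup.subset[OF P] .
  have fPc: "\<phi> ` P \<subseteq> carrier G" using inj_homD(2)[OF phi] .
  fix g assume "g \<in> N_phi G P \<phi>"
  hence m: "g \<in> carrier G \<and> conjmap G g ` P = P \<and>
   (\<exists>h\<in>carrier G. conjmap G h ` (\<phi> ` P) = \<phi> ` P \<and> (\<forall>x\<in>P. \<phi> (conjmap G g x) = conjmap G h (\<phi> x)))"
    unfolding N_phi_iff by blast
  obtain h where h: "h \<in> carrier G" "conjmap G h ` (\<phi> ` P) = \<phi> ` P" "\<forall>x\<in>P. \<phi> (conjmap G g x) = conjmap G h (\<phi> x)"
    using m by blast
  have g: "g \<in> carrier G" "conjmap G g ` P = P" using m by blast+
  have gi: "conjmap G (inv g) ` P = P" using conj_image_inv[OF g(1) Pc g(2)] .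
  hence n: "inv g \<in> normalizer G P" unfolding normalizer_def using g by blast
  have i: "conjmap G (inv h) ` (\<phi> ` P) = \<phi> ` P" using conj_image_inv[OF h(1) fPc h(2)] .
  have "\<forall>x\<in>P. \<phi> (conjmap G (inv g) x) = conjmap G (inv h) (\<phi> x)"
  proof
    fix x assume x: "x \<in> P"
    have xc: "x \<in> carrier G" using x Pc by blast
    define y where "y = conjmap G (inv g) x"
    have y: "y \<in> P" using gi x unfolding y_def by blast
    have "conjmap G g y = x" unfolding y_def using conjmap_cancel_inv[OF g(1) xc] .
    hence "\<phi> x = conjmap G h (\<phi> y)" using h(3) y by blast
    hence "conjmap G (inv h) (\<phi> x) = \<phi> y" using conjmap_inv_cancel[OF h(1)] fPc y by auto
    thus "\<phi> (conjmap G (inv g) x) = conjmap G (inv h) (\<phi> x)" unfolding y_def by simp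
  qed
  thus "inv g \<in> N_phi G P \<phi>" unfolding N_phi_iff using gi i inv_closed[OF h(1)] inv_closed[OF g(1)] by blast
qed

lemma N_phi_contains:
  assumes P: "subgroup P G" and A: "subgroup A G" "A \<subseteq> center G (carrier G)"
    and phi: "\<phi> \<in> inj_hom G P (carrier G)"
  shows "P <#> A \<subseteq> N_phi G P \<phi>"
proof (rule prod_in_subgroup[OF N_phi_subgroup[OF P phi]])
  have Pc: "P \<subseteq> carrier G" using subgroup.subset[OF P] .
  have fPc: "\<phi> ` P \<subseteq> carrier G" using inj_homD(2)[OF phi] .
  show "A \<subseteq> N_phi G P \<phi>"
  proof
    fix a assume a: "a \<in> A"
    have az: "a \<in> center G (carrier G)" using a A(2) by blast
    have ac: "a \<in> carrier G" using az unfolding center_def by blast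
    have "conjmap G a ` P = id ` P" using conjmap_central[OF az] Pc by (intro image_cong) auto
    hence "a \<in> normalizer G P" unfolding normalizer_def using ac by simp
    moreover have "\<forall>x\<in>P. \<phi> (conjmap G a x) = conjmap G \<one> (\<phi> x)"
    proof
      fix x assume x: "x \<in> P"
      have "x \<in> carrier G" "\<phi> x \<in> carrier G" using x Pc fPc by auto
      thus "\<phi> (conjmap G a x) = conjmap G \<one> (\<phi> x)" by (simp add: conjmap_one conjmap_central[OF az])
    qed
    ultimately show "a \<in> N_phi G P \<phi>" unfolding N_phi_iff normalizer_def using conj_image_one[OF fPc] one_closed by blast
  qed
  show "P \<subseteq> N_phi G P \<phi>"
  proof
    fix g assume g: "g \<in> P"
    have gc: "g \<in> carrier G" using g Pc by blast
    have n: "g \<in> normalizer G P" unfolding normalizer_def using conj_image_subgroup[OF P g] gc by blast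
    have e: "\<forall>x\<in>P. \<phi> (conjmap G g x) = conjmap G (\<phi> g) (\<phi> x)" using hom_conj[OF P phi g] by blast
    have "conjmap G (\<phi> g) ` (\<phi> ` P) = (\<lambda>x. \<phi> (conjmap G g x)) ` P"
      using e by (simp add: image_image)
    also have "\<dots> = \<phi> ` (conjmap G g ` P)" by (simp add: image_image)
    also have "\<dots> = \<phi> ` P" using conj_image_subgroup[OF P g] by simp
    finally have i: "conjmap G (\<phi> g) ` (\<phi> ` P) = \<phi> ` P" .
    have "\<phi> g \<in> carrier G" using fPc g by blast
    thus "g \<in> N_phi G P \<phi>" unfolding N_phi_iff using conj_image_subgroup[OF P g] gc i e by blast
  qed
qed

lemma exists_fc:
  assumes fs: "fusion_system G F" and fin: "finite (carrier G)" and P: "subgroup P G"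
  shows "\<exists>P'. fconj G F P P' \<and> fully_centralized G F P'"
proof -
  have b: "\<forall>Q. fconj G F P Q \<longrightarrow> card (centralizer G Q) < Suc (card (carrier G))"
  proof (intro allI impI)
    fix Q have "centralizer G Q \<subseteq> carrier G" unfolding centralizer_def by blast
    hence "card (centralizer G Q) \<le> card (carrier G)" using fin by (rule card_mono[rotated])
    thus "card (centralizer G Q) < Suc (card (carrier G))" by simp
  qed
  obtain P' where P': "fconj G F P P'" "\<forall>Q. fconj G F P Q \<longrightarrow> card (centralizer G Q) \<le> card (centralizer G P')"
    using Lattices_Big.ex_has_greatest_nat[of "fconj G F P" P, OF fconj_refl[OF fs P] b] by blast
  have "fully_centralized G F P'"
    unfolding fully_centralized_def using P' fconj_trans[OF fs P'(1)] by blast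
  thus ?thesis using P' by blast
qed


lemma satD:
  assumes "saturated p G F"
  shows "fusion_system G F"
    "\<And>P \<phi>. subgroup P G \<Longrightarrow> \<phi> \<in> F P (carrier G) \<Longrightarrow> fully_centralized G F (\<phi> ` P) \<Longrightarrow>
        \<exists>\<psi>\<in>F (N_phi G P \<phi>) (carrier G). \<forall>x\<in>P. \<psi> x = \<phi> x"
  using assms unfolding saturated_def by blast+

lemma ext_A:
  assumes sat: "saturated p G F" and A: "subgroup A G" "A \<subseteq> center G (carrier G)" "weakly_closed G F A"
    and P: "subgroup P G" and phi: "\<phi> \<in> F P (carrier G)" and fc: "fully_centralized G F (\<phi> ` P)"
  shows "\<exists>\<psi> \<in> F (P <#> A) (carrier G). (\<forall>x\<in>P. \<psi> x = \<phi> x) \<and> \<psi> ` A = A \<and> \<psi> ` (P <#> A) = \<phi> ` P <#> A"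
proof -
  have fs: "fusion_system G F" using satD(1)[OF sat] .
  have phii: "\<phi> \<in> inj_hom G P (carrier G)" using F_inj(1)[OF fs P subgroup_self phi] .
  obtain \<psi>0 where psi0: "\<psi>0 \<in> F (N_phi G P \<phi>) (carrier G)" "\<forall>x\<in>P. \<psi>0 x = \<phi> x"
    using satD(2)[OF sat P phi fc] by blast
  have N: "subgroup (N_phi G P \<phi>) G" using N_phi_subgroup[OF P phii] .
  have sub: "P <#> A \<subseteq> N_phi G P \<phi>" using N_phi_contains[OF P A(1,2) phii] .
  have PA: "subgroup (P <#> A) G" using prod_subgroup[OF P A(1,2)] .
  have Pc: "P \<subseteq> carrier G" and Ac: "A \<subseteq> carrier G" using P A(1) subgroup.subset by auto
  have PinPA: "P \<subseteq> P <#> A" using prod_sub_left[OF A(1) Pc] .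
  have AinPA: "A \<subseteq> P <#> A" using prod_sub_right[OF P Ac] .
  have r: "restrict \<psi>0 (P <#> A) \<in> F (P <#> A) (carrier G)"
    using restrict_F[OF fs PA N subgroup_self sub psi0(1)] .
  have AN: "A \<subseteq> N_phi G P \<phi>" using AinPA sub by blast
  have PN: "P \<subseteq> N_phi G P \<phi>" using PinPA sub by blast
  have iA: "\<psi>0 ` A = A" using weakly_closed_image[OF fs A(3) N AN psi0(1)] .
  have psi0i: "\<psi>0 \<in> inj_hom G (N_phi G P \<phi>) (carrier G)" using F_inj(1)[OF fs N subgroup_self psi0(1)] .
  have iPA: "\<psi>0 ` (P <#> A) = \<psi>0 ` P <#> \<psi>0 ` A" using hom_image_prod[OF psi0i N PN AN] .
  have iP: "\<psi>0 ` P = \<phi> ` P" using psi0(2) by (intro image_cong) auto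
  have e1: "\<forall>x\<in>P. restrict \<psi>0 (P <#> A) x = \<phi> x" using psi0(2) PinPA by auto
  have rim: "\<And>Y. Y \<subseteq> P <#> A \<Longrightarrow> restrict \<psi>0 (P <#> A) ` Y = \<psi>0 ` Y"
    by (rule image_cong) auto
  have e2: "restrict \<psi>0 (P <#> A) ` A = A" using iA rim[OF AinPA] by simp
  have e3: "restrict \<psi>0 (P <#> A) ` (P <#> A) = \<phi> ` P <#> A" using iPA iP iA rim[OF order_refl] by simp
  show ?thesis using r e1 e2 e3 by blast
qed

lemma main_lemma:
  assumes sat: "saturated p G F" and fin: "finite (carrier G)"
    and A: "subgroup A G" "A \<subseteq> center G (carrier G)" "weakly_closed G F A"
    and P: "subgroup P G" and alpha: "\<alpha> \<in> F P P"
  shows "\<alpha> \<in> normalizer_fs G F A P P"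
proof -
  have fs: "fusion_system G F" using satD(1)[OF sat] .
  obtain P' where fcj: "fconj G F P P'" and fc: "fully_centralized G F P'"
    using exists_fc[OF fs fin P] by blast
  obtain \<phi> where phi: "\<phi> \<in> F P P'" "\<phi> ` P = P'" and P': "subgroup P' G"
    using fcj unfolding fconj_def by blast
  have Pc: "P \<subseteq> carrier G" and Ac: "A \<subseteq> carrier G" and P'c: "P' \<subseteq> carrier G"
    using P A(1) P' subgroup.subset by auto
  have phiC: "\<phi> \<in> F P (carrier G)" using retarget_F[OF fs P P' subgroup_self phi(1)] phi(2) P'c by blast
  have phiinj: "inj_on \<phi> P" using inj_homD(3)[OF F_inj(2)[OF fs P P' phi(1)]] .
  have fc1: "fully_centralized G F (\<phi> ` P)" using fc phi(2) by simp
  obtain \<psi> where psi: "\<psi> \<in> F (P <#> A) (carrier G)" "\<forall>x\<in>P. \<psi> x = \<phi> x" "\<psi> ` A = A"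
      "\<psi> ` (P <#> A) = P' <#> A"
    using ext_A[OF sat A P phiC fc1] phi(2) by auto
  have PA: "subgroup (P <#> A) G" using prod_subgroup[OF P A(1,2)] .
  have P'A: "subgroup (P' <#> A) G" using prod_subgroup[OF P' A(1,2)] .
  have PinPA: "P \<subseteq> P <#> A" using prod_sub_left[OF A(1) Pc] .
  have AinPA: "A \<subseteq> P <#> A" using prod_sub_right[OF P Ac] .
  have P'inP'A: "P' \<subseteq> P' <#> A" using prod_sub_left[OF A(1) P'c] .
  have AinP'A: "A \<subseteq> P' <#> A" using prod_sub_right[OF P' Ac] .
  have psi1: "\<psi> \<in> F (P <#> A) (P' <#> A)" using retarget_F[OF fs PA subgroup_self P'A psi(1)] psi(4) by blast
  have psiinj: "inj_on \<psi> (P <#> A)" using inj_homD(3)[OF F_inj(2)[OF fs PA P'A psi1]] .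
  define \<rho> where "\<rho> = restrict (inv_into (P <#> A) \<psi>) (\<psi> ` (P <#> A))"
  have rho: "\<rho> \<in> F (P' <#> A) (P <#> A)"
    using fsD(5)[OF fs PA subgroup_self psi(1)] unfolding \<rho>_def psi(4) .
  define \<phi>i where "\<phi>i = restrict (inv_into P \<phi>) (\<phi> ` P)"
  have phii: "\<phi>i \<in> F P' P" using fsD(5)[OF fs P P' phi(1)] unfolding \<phi>i_def phi(2) .
  define \<alpha>' where "\<alpha>' = compose P' \<phi> (compose P' \<alpha> \<phi>i)"
  have a1: "compose P' \<alpha> \<phi>i \<in> F P' P" using fsD(3)[OF fs P' P P phii alpha] .
  have a': "\<alpha>' \<in> F P' P'" unfolding \<alpha>'_def using fsD(3)[OF fs P' P P' a1 phi(1)] .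
  have a'h: "\<alpha>' \<in> inj_hom G P' P'" using F_inj(2)[OF fs P' P' a'] .
  have a'C: "\<alpha>' \<in> F P' (carrier G)" using retarget_F[OF fs P' P' subgroup_self a'] inj_homD(2)[OF a'h] P'c by blast
  have finP': "finite P'" using fin P'c finite_subset by blast
  have a'im: "\<alpha>' ` P' = P'" using endo_inj_surj[OF finP' inj_homD(2)[OF a'h] inj_homD(3)[OF a'h]] .
  have fc2: "fully_centralized G F (\<alpha>' ` P')" using fc a'im by simp
  obtain \<beta> where beta: "\<beta> \<in> F (P' <#> A) (carrier G)" "\<forall>x\<in>P'. \<beta> x = \<alpha>' x" "\<beta> ` A = A"
      "\<beta> ` (P' <#> A) = P' <#> A"
    using ext_A[OF sat A P' a'C fc2] a'im by auto
  have beta1: "\<beta> \<in> F (P' <#> A) (P' <#> A)" using retarget_F[OF fs P'A subgroup_self P'A beta(1)] beta(4) by blast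
  define \<chi> where "\<chi> = compose (P <#> A) \<rho> (compose (P <#> A) \<beta> \<psi>)"
  have c1: "compose (P <#> A) \<beta> \<psi> \<in> F (P <#> A) (P' <#> A)" using fsD(3)[OF fs PA P'A P'A psi1 beta1] .
  have chi: "\<chi> \<in> F (P <#> A) (P <#> A)" unfolding \<chi>_def using fsD(3)[OF fs PA P'A PA c1 rho] .
  have rho_eval: "\<And>y. y \<in> P <#> A \<Longrightarrow> \<rho> (\<psi> y) = y"
    unfolding \<rho>_def using psiinj by simp
  have ahP: "\<alpha> ` P \<subseteq> P" using inj_homD(2)[OF F_inj(2)[OF fs P P alpha]] .
  have agree: "\<forall>x\<in>P. \<chi> x = \<alpha> x"
  proof
    fix x assume x: "x \<in> P"
    have xPA: "x \<in> P <#> A" using x PinPA by blast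
    have fx: "\<phi> x \<in> P'" using phi(2) x by blast
    have "\<phi>i (\<phi> x) = x" unfolding \<phi>i_def using phiinj x by simp
    hence "\<alpha>' (\<phi> x) = \<phi> (\<alpha> x)" unfolding \<alpha>'_def compose_def using fx by simp
    hence b: "\<beta> (\<psi> x) = \<phi> (\<alpha> x)" using beta(2) fx psi(2) x by simp
    have ax: "\<alpha> x \<in> P" using ahP x by blast
    have "\<phi> (\<alpha> x) = \<psi> (\<alpha> x)" using psi(2) ax by simp
    hence "\<rho> (\<beta> (\<psi> x)) = \<alpha> x" using b rho_eval ax PinPA by auto
    thus "\<chi> x = \<alpha> x" unfolding \<chi>_def compose_def using xPA by simp
  qed
  have inA: "\<chi> ` A \<subseteq> A"
  proof
    fix y assume "y \<in> \<chi> ` A"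
    then obtain a where a: "a \<in> A" "y = \<chi> a" by blast
    have aPA: "a \<in> P <#> A" using a AinPA by blast
    have "\<psi> a \<in> A" using psi(3) a by blast
    hence "\<beta> (\<psi> a) \<in> A" using beta(3) by blast
    then obtain a' where a': "a' \<in> A" "\<beta> (\<psi> a) = \<psi> a'" using psi(3) by blast
    have "\<rho> (\<beta> (\<psi> a)) = a'" using a' rho_eval AinPA by auto
    hence "y = a'" using a aPA unfolding \<chi>_def compose_def by simp
    thus "y \<in> A" using a' by simp
  qed
  show ?thesis unfolding normalizer_fs_def using alpha chi agree inA by blast
qed

end

lemma focal_eq_sets:
  assumes grp: "group S" and sat: "saturated p S F" and fin: "finite (carrier S)"
    and A: "subgroup A S" "A \<subseteq> center S (carrier S)" "weakly_closed S F A"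
  shows "focal S (carrier S) F = focal S (normalizer S A) (normalizer_fs S F A)"
proof -
  have n: "normalizer S A = carrier S" using group.normalizer_central[OF grp A(2)] .
  have "\<And>P. subgroup P S \<Longrightarrow> F P P = normalizer_fs S F A P P"
  proof
    fix P assume P: "subgroup P S"
    show "F P P \<subseteq> normalizer_fs S F A P P" using group.main_lemma[OF grp sat fin A P] by blast
    show "normalizer_fs S F A P P \<subseteq> F P P" unfolding normalizer_fs_def by blast
  qed
  hence "{inv\<^bsub>S\<^esub> g \<otimes>\<^bsub>S\<^esub> \<alpha> g | g P \<alpha>. subgroup P S \<and> P \<subseteq> carrier S \<and> g \<in> P \<and> \<alpha> \<in> F P P} =
         {inv\<^bsub>S\<^esub> g \<otimes>\<^bsub>S\<^esub> \<alpha> g | g P \<alpha>. subgroup P S \<and> P \<subseteq> normalizer S A \<and> g \<in> P \<and> \<alpha> \<in> normalizer_fs S F A P P}"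
    unfolding n by blast
  thus ?thesis unfolding focal_def by simp
qed

theorem proposition4p7:
  fixes S :: "('a, 'b) monoid_scheme"
    and F :: "'a set \<Rightarrow> 'a set \<Rightarrow> ('a \<Rightarrow> 'a) set"
    and Mor :: "'a set \<Rightarrow> 'a set \<Rightarrow> 'm set"
  assumes "p_local_finite_group p S F Mor cmp idm proj delta"
    and "subgroup A S" and "A \<subseteq> center S (carrier S)"
    and "weakly_closed S F A"
  shows "focal S (carrier S) F = focal S (normalizer S A) (normalizer_fs S F A)"
proof -
  have pg: "p_group p S" and sat: "saturated p S F"
    using assms(1) unfolding p_local_finite_group_def by blast+
  have grp: "group S" and fin: "finite (carrier S)" using pg unfolding p_group_def by blast+
  show ?thesis using focal_eq_sets[OF grp sat fin assms(2,3,4)] .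
qed

end
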